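(* Let $\mathcal{B}=\{x\in\mathbb{R}^d:\|x\|_2\le R\}$ and $g_1,\dots,g_m$ convex differentiable with $\mathcal{K}=\{x:g_i(x)\le0,\ i=1,\dots,m\}\subseteq\mathcal{B}$ nonempty. Let $f_1,\dots,f_T$ be convex differentiable, and assume for all $x,y\in\mathcal{B}$, $t$, $i$: $\|\nabla f_t(x)\|\le G$, $\|\nabla g_i(x)\|\le G$, $|g_i(x)|\le D$, and $f_t(x)-f_t(y)\le F$. Define $\mathcal{L}_t(x,\lambda)=f_t(x)+\sum_{i=1}^m\bigl(\lambda_ig_i(x)-\frac{\delta\eta}{2}\lambda_i^2\bigr)$ for $\lambda\in\mathbb{R}^m_+$, and run $x_1=0$, $\lambda_1=0$, $$x_{t+1}=\Pi_{\mathcal{B}}\bigl(x_t-\eta\nabla_x\mathcal{L}_t(x_t,\lambda_t)\bigr),\qquad \lambda_{t+1}=\Pi_{[0,\infty)^m}\bigl(\lambda_t+\eta\nabla_\lambda\mathcal{L}_t(x_t,\lambda_t)\bigr).$$ Let $a=R\sqrt{(m+1)G^2+2mD^2}$ and $\eta=R^2/(a\sqrt T)$; assume $T$ is large enough that $2\sqrt2\eta(m+1)\le1$, and choose $\delta>0$ with $\delta\ge(m+1)G^2+2m\delta^2\eta^2$. Then for $x_*=\arg\min_{x\in\mathcal{K}}\sum_{t=1}^Tf_t(x)$, $$\sum_{t=1}^T\bigl(f_t(x_t)-f_t(x_* )\bigr)\le a\sqrt T,\qquad \sum_{t=1}^Tg_i(x_t)\le\sqrt{2\bigl(FT+a\sqrt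 T\bigr)\sqrt T\Bigl(\frac{\delta R^2}{a}+\frac{ma}{R^2}\Bigr)}\quad(i=1,\dots,m).$$
   Context: $\Pi_S$ is Euclidean projection onto $S$; $x_t$ is chosen before $f_t$ is revealed. The iterates need not lie in $\mathcal{K}$; the second bound is the long-term violation of the constraints, which is $O(T^{3/4})$, while the regret is $O(\sqrt T)$. *)

theory Defs
  imports "HOL-Analysis.Analysis"
begin

end

theory Submission imports Defs "HOL-Analysis.Analysis" begin

lemma cs_sum:
  fixes a :: "nat \<Rightarrow> real"
  assumes "finite A"
  shows "(\<Sum>i\<in>A. a i)\<^sup>2 \<le> real (card A) * (\<Sum>i\<in>A. (a i)\<^sup>2)"
proof -
  have "0 \<le> (\<Sum>i\<in>A. \<Sum>j\<in>A. (a i - a j)\<^sup>2)" by (intro sum_nonneg) auto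
  also have "\<dots> = (\<Sum>i\<in>A. \<Sum>j\<in>A. (a i)\<^sup>2 + (a j)\<^sup>2 - 2 * (a i * a j))"
    by (simp add: power2_diff algebra_simps)
  also have "\<dots> = 2 * (real (card A) * (\<Sum>i\<in>A. (a i)\<^sup>2)) - 2 * (\<Sum>i\<in>A. a i)\<^sup>2"
    by (simp add: sum.distrib sum_subtractf sum_distrib_left sum_distrib_right power2_eq_square
        algebra_simps)
  finally show ?thesis by simp
qed

lemma proj_le:
  fixes S :: "'a::euclidean_space set"
  assumes "convex S" "closed S" "y \<in> S"
  shows "norm (closest_point S z - y) \<le> norm (z - y)"
  using closest_point_lipschitz[OF assms(1,2), of z y] closest_point_self[OF assms(3)] assms(3)
  by (auto simp: dist_norm)

lemma grad_ineq:
  fixes f :: "'a::euclidean_space \<Rightarrow> real"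
  assumes cv: "convex_on UNIV f" and d: "(f has_derivative (\<lambda>h. df \<bullet> h)) (at x)"
  shows "f u - f x \<ge> df \<bullet> (u - x)"
proof -
  let ?p = "\<lambda>s::real. f (x + s *\<^sub>R (u - x))"
  have cp: "convex_on UNIV ?p"
  proof (rule convex_onI)
    fix s t :: real and w :: real assume "0 < w" "w < 1"
    have "x + ((1 - w) * s + w * t) *\<^sub>R (u - x) = (1 - w) *\<^sub>R (x + s *\<^sub>R (u - x)) + w *\<^sub>R (x + t *\<^sub>R (u - x))"
      by (simp add: algebra_simps)
    then show "?p ((1 - w) *\<^sub>R s + w *\<^sub>R t) \<le> (1 - w) * ?p s + w * ?p t"
      using convex_onD[OF cv, of w "x + s *\<^sub>R (u - x)" "x + t *\<^sub>R (u - x)"] \<open>0<w\<close> \<open>w<1\<close> by simp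
  qed simp
  have "((\<lambda>s. x + s *\<^sub>R (u - x)) has_derivative (\<lambda>s. s *\<^sub>R (u - x))) (at 0)"
    by (auto intro!: derivative_eq_intros)
  from diff_chain_at[OF this, of f "\<lambda>h. df \<bullet> h"] d
  have "(?p has_derivative (\<lambda>s. df \<bullet> (s *\<^sub>R (u - x)))) (at 0)" by (simp add: o_def)
  then have "(?p has_field_derivative (df \<bullet> (u - x))) (at 0)"
    unfolding has_field_derivative_def by (simp add: mult.commute[of _ "df \<bullet> (u - x)"])
  from convex_on_imp_above_tangent[OF cp, of 0 1] this
  show ?thesis by simp
qed
lemma telescope:
  fixes A B :: "nat \<Rightarrow> real"
  assumes "\<forall>t\<in>{1..<n}. B t = A (Suc t)" "n \<ge> 1"
  shows "(\<Sum>t=1..n. A t - B t) = A 1 - B n"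
  using assms
proof (induction n)
  case 0 then show ?case by simp
next
  case (Suc n)
  show ?case
  proof (cases "n = 0")
    case True then show ?thesis by simp
  next
    case False
    then have "(\<Sum>t=1..n. A t - B t) = A 1 - B n" using Suc by auto
    moreover have "B n = A (Suc n)" using Suc.prems False by auto
    ultimately show ?thesis by simp
  qed
qed

theorem mainTheorem11:
  fixes R G D F \<delta> a \<eta> :: real and m T :: nat
    and g :: "nat \<Rightarrow> 'a::euclidean_space \<Rightarrow> real" and dg :: "nat \<Rightarrow> 'a \<Rightarrow> 'a"
    and f :: "nat \<Rightarrow> 'a \<Rightarrow> real" and df :: "nat \<Rightarrow> 'a \<Rightarrow> 'a"
    and x :: "nat \<Rightarrow> 'a" and lam :: "nat \<Rightarrow> nat \<Rightarrow> real" and xs :: 'a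
  assumes R_pos: "R > 0" and T_pos: "T \<ge> 1"
    and g_convex: "\<forall>i\<in>{1..m}. convex_on UNIV (g i)"
    and g_grad: "\<forall>i\<in>{1..m}. \<forall>y. (g i has_derivative (\<lambda>h. dg i y \<bullet> h)) (at y)"
    and K_sub: "{y. \<forall>i\<in>{1..m}. g i y \<le> 0} \<subseteq> cball 0 R"
    and K_ne: "{y. \<forall>i\<in>{1..m}. g i y \<le> 0} \<noteq> {}"
    and f_convex: "\<forall>t\<in>{1..T}. convex_on UNIV (f t)"
    and f_grad: "\<forall>t\<in>{1..T}. \<forall>y. (f t has_derivative (\<lambda>h. df t y \<bullet> h)) (at y)"
    and df_bound: "\<forall>t\<in>{1..T}. \<forall>y\<in>cball 0 R. norm (df t y) \<le> G"
    and dg_bound: "\<forall>i\<in>{1..m}. \<forall>y\<in>cball 0 R. norm (dg i y) \<le> G"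
    and g_bound: "\<forall>i\<in>{1..m}. \<forall>y\<in>cball 0 R. \<bar>g i y\<bar> \<le> D"
    and f_range: "\<forall>t\<in>{1..T}. \<forall>y\<in>cball 0 R. \<forall>z\<in>cball 0 R. f t y - f t z \<le> F"
    and a_def: "a = R * sqrt ((real m + 1) * G\<^sup>2 + 2 * real m * D\<^sup>2)"
    and eta_def: "\<eta> = R\<^sup>2 / (a * sqrt (real T))"
    and T_large: "2 * sqrt 2 * \<eta> * (real m + 1) \<le> 1"
    and delta_pos: "\<delta> > 0"
    and delta_ge: "\<delta> \<ge> (real m + 1) * G\<^sup>2 + 2 * real m * \<delta>\<^sup>2 * \<eta>\<^sup>2"
    and x_init: "x 1 = 0"
    and lam_init: "\<forall>i\<in>{1..m}. lam 1 i = 0"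
    and x_step: "\<forall>t\<in>{1..<T}. x (Suc t) = closest_point (cball 0 R)
        (x t - \<eta> *\<^sub>R (df t (x t) + (\<Sum>i=1..m. lam t i *\<^sub>R dg i (x t))))"
    and lam_step: "\<forall>t\<in>{1..<T}. \<forall>i\<in>{1..m}. lam (Suc t) i = closest_point {0..}
        (lam t i + \<eta> * (g i (x t) - \<delta> * \<eta> * lam t i))"
    and xs_in: "xs \<in> {y. \<forall>i\<in>{1..m}. g i y \<le> 0}"
    and xs_min: "\<forall>y\<in>{y. \<forall>i\<in>{1..m}. g i y \<le> 0}. (\<Sum>t=1..T. f t xs) \<le> (\<Sum>t=1..T. f t y)"
  shows "(\<Sum>t=1..T. f t (x t) - f t xs) \<le> a * sqrt (real T) \<and>
    (\<forall>i\<in>{1..m}. (\<Sum>t=1..T. g i (x t)) \<le>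
       sqrt (2 * (F * real T + a * sqrt (real T)) * sqrt (real T)
             * (\<delta> * R\<^sup>2 / a + real m * a / R\<^sup>2)))"
proof -
  define B where "B = cball (0::'a) R"
  define Kset where "Kset = {y. \<forall>i\<in>{1..m}. g i y \<le> 0}"
  have cB: "convex B" "closed B" "B \<noteq> {}" "0 \<in> B" using R_pos by (auto simp: B_def)
  have cP: "convex {0::real..}" "closed {0::real..}" "{0::real..} \<noteq> {}" by auto
  have xB: "\<forall>t\<in>{1..T}. x t \<in> B"
  proof
    fix t assume t: "t \<in> {1..T}"
    show "x t \<in> B"
    proof (cases "t = 1")
      case True then show ?thesis using x_init cB by simp
    next
      case False
      then obtain s where s: "t = Suc s" "s \<in> {1..<T}" using t by (cases t) auto
      show ?thesis using x_step s closest_point_in_set[OF cB(2,3)] by (simp add: B_def)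
    qed
  qed
  have lam0: "\<forall>t\<in>{1..T}. \<forall>i\<in>{1..m}. lam t i \<ge> 0"
  proof (intro ballI)
    fix t i assume t: "t \<in> {1..T}" and i: "i \<in> {1..m}"
    show "lam t i \<ge> 0"
    proof (cases "t = 1")
      case True then show ?thesis using lam_init i by simp
    next
      case False
      then obtain s where s: "t = Suc s" "s \<in> {1..<T}" using t by (cases t) auto
      show ?thesis using lam_step s i closest_point_in_set[OF cP(2,3)] by auto
    qed
  qed
  have xsB: "xs \<in> B" using xs_in K_sub by (auto simp: B_def)
  have G0: "G \<ge> 0" using df_bound T_pos cB(4) B_def
    by (metis atLeastAtMost_iff le_refl norm_ge_zero order_trans)
  have F0: "F \<ge> 0" using f_range T_pos xsB B_def by fastforce
  define K where "K = (real m + 1) * G\<^sup>2 + 2 * real m * D\<^sup>2"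
  have K0: "K \<ge> 0" unfolding K_def by auto
  have aK: "a = R * sqrt K" using a_def K_def by simp
  have a0: "a \<ge> 0" using aK R_pos K0 by simp
  define s where "s = sqrt (real T)"
  have s0: "s > 0" and s2: "s\<^sup>2 = real T" using T_pos by (auto simp: s_def)
  show ?thesis
  proof (cases "a = 0")
    case True
    then have "K = 0" using aK R_pos K0 by simp
    moreover have "(real m + 1) * G\<^sup>2 \<ge> 0" "2 * real m * D\<^sup>2 \<ge> 0" by auto
    ultimately have z1: "(real m + 1) * G\<^sup>2 = 0" and z2: "2 * real m * D\<^sup>2 = 0"
      unfolding K_def by linarith+
    from z1 have G00: "G = 0" by simp
    have Dm: "D = 0" if "m \<ge> 1" using z2 that by simp
    have "(\<Sum>t=1..T. f t (x t) - f t xs) \<le> (\<Sum>t=1..T. 0)"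
    proof (rule sum_mono)
      fix t assume t: "t \<in> {1..T}"
      have "df t (x t) \<bullet> (xs - x t) \<le> f t xs - f t (x t)"
        using grad_ineq[of "f t" "df t (x t)" "x t" xs] f_convex f_grad t by auto
      moreover have "df t (x t) = 0" using df_bound t xB G00 by (auto simp: B_def)
      ultimately show "f t (x t) - f t xs \<le> 0" by simp
    qed
    moreover have "\<forall>i\<in>{1..m}. (\<Sum>t=1..T. g i (x t)) \<le> (\<Sum>t=1..T. 0)"
    proof (intro ballI sum_mono)
      fix i t assume i: "i \<in> {1..m}" and t: "t \<in> {1..T}"
      show "g i (x t) \<le> 0" using g_bound i t xB Dm[of] by (auto simp: B_def)
    qed
    ultimately show ?thesis using True by simp
  next
    case False
    then have apos: "a > 0" using a0 by simp
    have eta0: "\<eta> > 0" using eta_def apos R_pos T_pos by simp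
    define Sg where "Sg t = df t (x t) + (\<Sum>i=1..m. lam t i *\<^sub>R dg i (x t))" for t
    define h where "h t i = g i (x t) - \<delta> * \<eta> * lam t i" for t i
    define xn where "xn t = closest_point B (x t - \<eta> *\<^sub>R Sg t)" for t
    define ln where "ln t i = closest_point {0::real..} (lam t i + \<eta> * h t i)" for t i
    define Dm where "Dm \<mu> t = (norm (x t - xs))\<^sup>2 + (\<Sum>i=1..m. (lam t i - \<mu> i)\<^sup>2)" for \<mu> :: "nat \<Rightarrow> real" and t
    define Em where "Em \<mu> t = (norm (xn t - xs))\<^sup>2 + (\<Sum>i=1..m. (ln t i - \<mu> i)\<^sup>2)" for \<mu> :: "nat \<Rightarrow> real" and t
    have nxt: "Dm \<mu> (Suc t) = Em \<mu> t" if "t \<in> {1..<T}" for \<mu> t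
      using x_step lam_step that unfolding Dm_def Em_def xn_def ln_def Sg_def h_def B_def by simp
    have step: "f t (x t) - f t xs + (\<Sum>i=1..m. \<mu> i * g i (x t)) - \<delta> * \<eta> / 2 * (\<Sum>i=1..m. (\<mu> i)\<^sup>2)
       \<le> (Dm \<mu> t - Em \<mu> t) / (2 * \<eta>) + \<eta> / 2 * K"
      if t: "t \<in> {1..T}" and mu: "\<forall>i\<in>{1..m}. \<mu> i \<ge> 0" for t \<mu>
    proof -
      have xt: "x t \<in> B" using xB t by simp
      have lt: "\<forall>i\<in>{1..m}. lam t i \<ge> 0" using lam0 t by simp
      define P where "P = Sg t \<bullet> (x t - xs)"
      define Q where "Q = (\<Sum>i=1..m. h t i * (\<mu> i - lam t i))"
      define q where "q = (\<Sum>i=1..m. (lam t i)\<^sup>2)"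
      define N where "N = (norm (Sg t))\<^sup>2 + (\<Sum>i=1..m. (h t i)\<^sup>2)"
      have q0: "q \<ge> 0" unfolding q_def by (intro sum_nonneg) auto
      have a1: "(norm (xn t - xs))\<^sup>2 \<le> (norm (x t - xs))\<^sup>2 - 2 * \<eta> * P + \<eta>\<^sup>2 * (norm (Sg t))\<^sup>2"
      proof -
        have "norm (xn t - xs) \<le> norm (x t - \<eta> *\<^sub>R Sg t - xs)"
          unfolding xn_def using proj_le[OF cB(1,2) xsB] by blast
        then have "(norm (xn t - xs))\<^sup>2 \<le> (norm (x t - \<eta> *\<^sub>R Sg t - xs))\<^sup>2"
          by (simp add: power_mono)
        also have "\<dots> = (norm (x t - xs))\<^sup>2 - 2 * \<eta> * P + \<eta>\<^sup>2 * (norm (Sg t))\<^sup>2"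
          unfolding P_def power2_norm_eq_inner
          by (simp add: inner_diff_left inner_diff_right inner_commute algebra_simps power2_eq_square)
        finally show ?thesis .
      qed
      have b1: "(\<Sum>i=1..m. (ln t i - \<mu> i)\<^sup>2) \<le> (\<Sum>i=1..m. (lam t i - \<mu> i)\<^sup>2) - 2 * \<eta> * Q + \<eta>\<^sup>2 * (\<Sum>i=1..m. (h t i)\<^sup>2)"
      proof -
        have "(\<Sum>i=1..m. (ln t i - \<mu> i)\<^sup>2) \<le> (\<Sum>i=1..m. (lam t i - \<mu> i)\<^sup>2 - 2 * \<eta> * (h t i * (\<mu> i - lam t i)) + \<eta>\<^sup>2 * (h t i)\<^sup>2)"
        proof (rule sum_mono)
          fix i assume i: "i \<in> {1..m}"
          have "norm (ln t i - \<mu> i) \<le> norm (lam t i + \<eta> * h t i - \<mu> i)"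
            unfolding ln_def using proj_le[OF cP(1,2), of "\<mu> i"] mu i by auto
          then have "(ln t i - \<mu> i)\<^sup>2 \<le> (lam t i + \<eta> * h t i - \<mu> i)\<^sup>2"
            by (simp add: abs_le_square_iff)
          also have "\<dots> = (lam t i - \<mu> i)\<^sup>2 - 2 * \<eta> * (h t i * (\<mu> i - lam t i)) + \<eta>\<^sup>2 * (h t i)\<^sup>2"
            by (simp add: power2_eq_square algebra_simps)
          finally show "(ln t i - \<mu> i)\<^sup>2 \<le> \<dots>" .
        qed
        also have "\<dots> = (\<Sum>i=1..m. (lam t i - \<mu> i)\<^sup>2) - 2 * \<eta> * Q + \<eta>\<^sup>2 * (\<Sum>i=1..m. (h t i)\<^sup>2)"
          unfolding Q_def by (simp add: sum.distrib sum_subtractf sum_distrib_left)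
        finally show ?thesis .
      qed
      have c1: "P \<ge> f t (x t) - f t xs + (\<Sum>i=1..m. lam t i * g i (x t))"
      proof -
        have e: "P = df t (x t) \<bullet> (x t - xs) + (\<Sum>i=1..m. lam t i * (dg i (x t) \<bullet> (x t - xs)))"
          unfolding P_def Sg_def by (simp add: inner_add_left inner_sum_left)
        have "df t (x t) \<bullet> (xs - x t) \<le> f t xs - f t (x t)"
          using grad_ineq[of "f t" "df t (x t)" "x t" xs] f_convex f_grad t by auto
        moreover have "df t (x t) \<bullet> (xs - x t) = - (df t (x t) \<bullet> (x t - xs))"
          by (simp add: inner_diff_right)
        ultimately have d1: "df t (x t) \<bullet> (x t - xs) \<ge> f t (x t) - f t xs" by simp
        have "(\<Sum>i=1..m. lam t i * g i (x t)) \<le> (\<Sum>i=1..m. lam t i * (dg i (x t) \<bullet> (x t - xs)))"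
        proof (rule sum_mono)
          fix i assume i: "i \<in> {1..m}"
          have "dg i (x t) \<bullet> (xs - x t) \<le> g i xs - g i (x t)"
            using grad_ineq[of "g i" "dg i (x t)" "x t" xs] g_convex g_grad i by auto
          moreover have "dg i (x t) \<bullet> (xs - x t) = - (dg i (x t) \<bullet> (x t - xs))"
            by (simp add: inner_diff_right)
          moreover have "g i xs \<le> 0" using xs_in i by auto
          ultimately have "g i (x t) \<le> dg i (x t) \<bullet> (x t - xs)" by simp
          then show "lam t i * g i (x t) \<le> lam t i * (dg i (x t) \<bullet> (x t - xs))"
            using lt i by (simp add: mult_left_mono)
        qed
        then show ?thesis using e d1 by simp
      qed
      have d1: "Q \<ge> (\<Sum>i=1..m. \<mu> i * g i (x t)) - (\<Sum>i=1..m. lam t i * g i (x t)) + \<delta> * \<eta> / 2 * q - \<delta> * \<eta> / 2 * (\<Sum>i=1..m. (\<mu> i)\<^sup>2)"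
      proof -
        have "(\<Sum>i=1..m. \<mu> i * g i (x t) - lam t i * g i (x t) + \<delta> * \<eta> / 2 * (lam t i)\<^sup>2 - \<delta> * \<eta> / 2 * (\<mu> i)\<^sup>2) \<le> Q"
          unfolding Q_def
        proof (rule sum_mono)
          fix i assume i: "i \<in> {1..m}"
          have "0 \<le> \<delta> * \<eta> / 2 * (lam t i - \<mu> i)\<^sup>2" using delta_pos eta0 by simp
          then show "\<mu> i * g i (x t) - lam t i * g i (x t) + \<delta> * \<eta> / 2 * (lam t i)\<^sup>2 - \<delta> * \<eta> / 2 * (\<mu> i)\<^sup>2 \<le> h t i * (\<mu> i - lam t i)"
            unfolding h_def by (simp add: power2_eq_square algebra_simps)
        qed
        then show ?thesis unfolding q_def by (simp add: sum.distrib sum_subtractf sum_distrib_left)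
      qed
      have e1: "N \<le> K + \<delta> * q"
      proof -
        define sl where "sl = (\<Sum>i=1..m. lam t i)"
        have sl0: "sl \<ge> 0" unfolding sl_def using lt by (intro sum_nonneg) auto
        have "norm (Sg t) \<le> norm (df t (x t)) + norm (\<Sum>i=1..m. lam t i *\<^sub>R dg i (x t))"
          unfolding Sg_def by (rule norm_triangle_ineq)
        also have "norm (\<Sum>i=1..m. lam t i *\<^sub>R dg i (x t)) \<le> (\<Sum>i=1..m. norm (lam t i *\<^sub>R dg i (x t)))"
          by (rule norm_sum)
        also have "\<dots> \<le> (\<Sum>i=1..m. lam t i * G)"
        proof (rule sum_mono)
          fix i assume i: "i \<in> {1..m}"
          have "norm (dg i (x t)) \<le> G" using dg_bound i xt by (auto simp: B_def)
          then show "norm (lam t i *\<^sub>R dg i (x t)) \<le> lam t i * G"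
            using lt i by (simp add: mult_left_mono)
        qed
        also have "norm (df t (x t)) \<le> G" using df_bound t xt by (auto simp: B_def)
        finally have n1: "norm (Sg t) \<le> G * (1 + sl)" unfolding sl_def
          by (simp add: sum_distrib_left algebra_simps)
        have cs: "sl\<^sup>2 \<le> real m * q" unfolding sl_def q_def using cs_sum[of "{1..m}" "lam t"] by simp
        have "(1 + sl)\<^sup>2 \<le> (real m + 1) * (1 + q)"
        proof (cases "m = 0")
          case True then show ?thesis using cs q0 by (simp add: sl_def)
        next
          case False
          then have mp: "real m > 0" by simp
          have "2 * sl \<le> real m + sl\<^sup>2 / real m"
          proof -
            have "0 \<le> (real m - sl)\<^sup>2 / real m" using mp by simp
            also have "\<dots> = real m - 2 * sl + sl\<^sup>2 / real m" using mp
              by (simp add: power2_eq_square field_simps)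
            finally show ?thesis by simp
          qed
          moreover have "sl\<^sup>2 / real m \<le> q" using cs mp by (simp add: field_simps mult.commute)
          ultimately show ?thesis using cs by (simp add: power2_eq_square algebra_simps)
        qed
        have n2: "(norm (Sg t))\<^sup>2 \<le> (real m + 1) * G\<^sup>2 * (1 + q)"
        proof -
          have "(norm (Sg t))\<^sup>2 \<le> (G * (1 + sl))\<^sup>2" using n1 by (simp add: power_mono)
          also have "\<dots> = G\<^sup>2 * (1 + sl)\<^sup>2" by (simp add: power_mult_distrib)
          also have "\<dots> \<le> G\<^sup>2 * ((real m + 1) * (1 + q))"
            using \<open>(1 + sl)\<^sup>2 \<le> _\<close> by (simp add: mult_left_mono)
          finally show ?thesis by (simp add: algebra_simps)
        qed
        have n3: "(\<Sum>i=1..m. (h t i)\<^sup>2) \<le> (\<Sum>i=1..m. 2 * D\<^sup>2 + 2 * \<delta>\<^sup>2 * \<eta>\<^sup>2 * (lam t i)\<^sup>2)"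
        proof (rule sum_mono)
          fix i assume i: "i \<in> {1..m}"
          have "\<bar>g i (x t)\<bar> \<le> D" using g_bound i xt by (auto simp: B_def)
          then have gD: "(g i (x t))\<^sup>2 \<le> D\<^sup>2" by (metis abs_le_square_iff abs_of_nonneg abs_ge_zero order_trans) 
          have "(h t i)\<^sup>2 \<le> 2 * (g i (x t))\<^sup>2 + 2 * (\<delta> * \<eta> * lam t i)\<^sup>2"
            unfolding h_def using zero_le_power2[of "g i (x t) + \<delta> * \<eta> * lam t i"]
            by (simp add: power2_eq_square algebra_simps)
          then show "(h t i)\<^sup>2 \<le> 2 * D\<^sup>2 + 2 * \<delta>\<^sup>2 * \<eta>\<^sup>2 * (lam t i)\<^sup>2"
            using gD by (simp add: power_mult_distrib)
        qed
        also have "\<dots> = 2 * real m * D\<^sup>2 + 2 * \<delta>\<^sup>2 * \<eta>\<^sup>2 * q"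
          unfolding q_def by (simp add: sum.distrib sum_distrib_left)
        finally have n3': "(\<Sum>i=1..m. (h t i)\<^sup>2) \<le> 2 * real m * D\<^sup>2 + 2 * \<delta>\<^sup>2 * \<eta>\<^sup>2 * q" .
        have "((real m + 1) * G\<^sup>2 + 2 * \<delta>\<^sup>2 * \<eta>\<^sup>2) * q \<le> \<delta> * q"
        proof (cases "m = 0")
          case True then show ?thesis by (simp add: q_def)
        next
          case False
          then have "1 * (\<delta>\<^sup>2 * \<eta>\<^sup>2) \<le> real m * (\<delta>\<^sup>2 * \<eta>\<^sup>2)"
            by (intro mult_right_mono) auto
          then have "2 * \<delta>\<^sup>2 * \<eta>\<^sup>2 \<le> 2 * real m * \<delta>\<^sup>2 * \<eta>\<^sup>2" by simp
          then show ?thesis using delta_ge q0 by (intro mult_right_mono) auto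
        qed
        then show ?thesis unfolding N_def K_def using n2 n3' by (simp add: algebra_simps)
      qed
      have Ee: "Em \<mu> t \<le> Dm \<mu> t - 2 * \<eta> * (P + Q) + \<eta>\<^sup>2 * N"
        using a1 b1 unfolding Em_def Dm_def N_def by (simp add: algebra_simps)
      have "\<eta>\<^sup>2 * N \<le> \<eta>\<^sup>2 * (K + \<delta> * q)" using e1 by (simp add: mult_left_mono)
      then have "2 * \<eta> * (P + Q) - \<eta>\<^sup>2 * \<delta> * q \<le> Dm \<mu> t - Em \<mu> t + \<eta>\<^sup>2 * K"
        using Ee by (simp add: algebra_simps)
      moreover have "2 * \<eta> * (f t (x t) - f t xs + (\<Sum>i=1..m. \<mu> i * g i (x t)) - \<delta> * \<eta> / 2 * (\<Sum>i=1..m. (\<mu> i)\<^sup>2))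
          \<le> 2 * \<eta> * (P + Q) - \<eta>\<^sup>2 * \<delta> * q"
      proof -
        have "f t (x t) - f t xs + (\<Sum>i=1..m. \<mu> i * g i (x t)) - \<delta> * \<eta> / 2 * (\<Sum>i=1..m. (\<mu> i)\<^sup>2)
            \<le> P + Q - \<delta> * \<eta> / 2 * q" using c1 d1 by simp
        then have "2 * \<eta> * (f t (x t) - f t xs + (\<Sum>i=1..m. \<mu> i * g i (x t)) - \<delta> * \<eta> / 2 * (\<Sum>i=1..m. (\<mu> i)\<^sup>2))
            \<le> 2 * \<eta> * (P + Q - \<delta> * \<eta> / 2 * q)" using eta0 by (simp add: mult_left_mono)
        then show ?thesis by (simp add: algebra_simps power2_eq_square)
      qed
      ultimately have "2 * \<eta> * (f t (x t) - f t xs + (\<Sum>i=1..m. \<mu> i * g i (x t)) - \<delta> * \<eta> / 2 * (\<Sum>i=1..m. (\<mu> i)\<^sup>2))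
          \<le> Dm \<mu> t - Em \<mu> t + \<eta>\<^sup>2 * K" by linarith
      then show ?thesis using eta0 by (simp add: field_simps power2_eq_square)
    qed
    have sumstep: "(\<Sum>t=1..T. f t (x t) - f t xs) + (\<Sum>t=1..T. \<Sum>i=1..m. \<mu> i * g i (x t))
        - real T * (\<delta> * \<eta> / 2 * (\<Sum>i=1..m. (\<mu> i)\<^sup>2))
       \<le> (R\<^sup>2 + (\<Sum>i=1..m. (\<mu> i)\<^sup>2)) / (2 * \<eta>) + real T * (\<eta> / 2 * K)"
      if mu: "\<forall>i\<in>{1..m}. \<mu> i \<ge> 0" for \<mu>
    proof -
      have "(\<Sum>t=1..T. f t (x t) - f t xs + (\<Sum>i=1..m. \<mu> i * g i (x t)) - \<delta> * \<eta> / 2 * (\<Sum>i=1..m. (\<mu> i)\<^sup>2))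
         \<le> (\<Sum>t=1..T. (Dm \<mu> t - Em \<mu> t) / (2 * \<eta>) + \<eta> / 2 * K)"
        using step mu by (intro sum_mono) auto
      also have "\<dots> = (\<Sum>t=1..T. Dm \<mu> t - Em \<mu> t) / (2 * \<eta>) + real T * (\<eta> / 2 * K)"
        by (simp add: sum.distrib sum_divide_distrib)
      also have "(\<Sum>t=1..T. Dm \<mu> t - Em \<mu> t) = Dm \<mu> 1 - Em \<mu> T"
        using telescope[of T "Em \<mu>" "Dm \<mu>"] nxt T_pos by auto
      also have "Dm \<mu> 1 - Em \<mu> T \<le> R\<^sup>2 + (\<Sum>i=1..m. (\<mu> i)\<^sup>2)"
      proof -
        have "Em \<mu> T \<ge> 0" unfolding Em_def by (intro add_nonneg_nonneg sum_nonneg) auto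
        moreover have "Dm \<mu> 1 = (norm xs)\<^sup>2 + (\<Sum>i=1..m. (\<mu> i)\<^sup>2)"
          unfolding Dm_def using x_init lam_init by simp
        moreover have "(norm xs)\<^sup>2 \<le> R\<^sup>2" using xsB by (simp add: B_def power_mono)
        ultimately show ?thesis by simp
      qed
      finally have "(\<Sum>t=1..T. f t (x t) - f t xs + (\<Sum>i=1..m. \<mu> i * g i (x t)) - \<delta> * \<eta> / 2 * (\<Sum>i=1..m. (\<mu> i)\<^sup>2))
         \<le> (R\<^sup>2 + (\<Sum>i=1..m. (\<mu> i)\<^sup>2)) / (2 * \<eta>) + real T * (\<eta> / 2 * K)"
        using eta0 by (simp add: divide_right_mono)
      then show ?thesis by (simp add: sum.distrib sum_subtractf)
    qed
    have etas: "\<eta> = R\<^sup>2 / (a * s)" using eta_def s_def by simp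
    have a2: "a\<^sup>2 = R\<^sup>2 * K" using aK K0 by (simp add: power_mult_distrib)
    have id1: "R\<^sup>2 / (2 * \<eta>) = a * s / 2" using etas apos R_pos s0 eta0 by (simp add: field_simps)
    have id2: "real T * (\<eta> / 2 * K) = a * s / 2"
    proof -
      have "real T * (\<eta> / 2 * K) = s\<^sup>2 * R\<^sup>2 * K / (2 * a * s)" using etas s2 by simp
      also have "\<dots> = s * a\<^sup>2 / (2 * a)" using a2 s0 by (simp add: power2_eq_square field_simps)
      also have "\<dots> = a * s / 2" using apos by (simp add: power2_eq_square field_simps)
      finally show ?thesis .
    qed
    have reg: "(\<Sum>t=1..T. f t (x t) - f t xs) \<le> a * sqrt (real T)"
      using sumstep[of "\<lambda>_. 0"] id1 id2 s_def by simp
    have reglow: "(\<Sum>t=1..T. f t (x t) - f t xs) \<ge> - (F * real T)"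
    proof -
      have "(\<Sum>t=1..T. - F) \<le> (\<Sum>t=1..T. f t (x t) - f t xs)"
      proof (rule sum_mono)
        fix t assume t: "t \<in> {1..T}"
        have "x t \<in> cball 0 R" "xs \<in> cball 0 R" using t xB xsB by (auto simp: B_def)
        then have "f t xs - f t (x t) \<le> F" using f_range t by blast
        then show "- F \<le> f t (x t) - f t xs" by simp
      qed
      then show ?thesis by (simp add: mult.commute)
    qed
    have viol: "(\<Sum>t=1..T. g j (x t)) \<le>
       sqrt (2 * (F * real T + a * sqrt (real T)) * sqrt (real T)
             * (\<delta> * R\<^sup>2 / a + real m * a / R\<^sup>2))" if j: "j \<in> {1..m}" for j
    proof -
      define S where "S = (\<Sum>t=1..T. g j (x t))"
      define X where "X = 2 * (F * real T + a * s) * s * (\<delta> * R\<^sup>2 / a + real m * a / R\<^sup>2)"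
      have X0: "X \<ge> 0" unfolding X_def using F0 apos s0 delta_pos R_pos by simp
      have "S \<le> sqrt X"
      proof (cases "S \<le> 0")
        case True then show ?thesis using X0 by (meson order_trans real_sqrt_ge_zero)
      next
        case False
        then have Sp: "S > 0" by simp
        define Q where "Q = real T * \<delta> * \<eta> / 2 + 1 / (2 * \<eta>)"
        have Qp: "Q > 0" unfolding Q_def using eta0 delta_pos by (simp add: add_nonneg_pos)
        define c where "c = S / (2 * Q)"
        have cp: "c > 0" unfolding c_def using Sp Qp by simp
        define \<mu> where "\<mu> i = (if i = j then c else 0)" for i :: nat
        have mu0: "\<forall>i\<in>{1..m}. \<mu> i \<ge> 0" using cp by (simp add: \<mu>_def)
        have e1: "(\<Sum>i=1..m. \<mu> i * g i (x t)) = c * g j (x t)" for t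
          using j by (simp add: \<mu>_def if_distrib[of "\<lambda>z. z * _"] sum.delta cong: if_cong)
        have e2: "(\<Sum>i=1..m. (\<mu> i)\<^sup>2) = c\<^sup>2"
          using j by (simp add: \<mu>_def if_distrib[of "\<lambda>z. z\<^sup>2"] sum.delta cong: if_cong)
        have "(\<Sum>t=1..T. f t (x t) - f t xs) + c * S - real T * (\<delta> * \<eta> / 2 * c\<^sup>2)
           \<le> (R\<^sup>2 + c\<^sup>2) / (2 * \<eta>) + real T * (\<eta> / 2 * K)"
          using sumstep[OF mu0] unfolding e1 e2 S_def by (simp add: sum_distrib_left)
        then have "c * S - Q * c\<^sup>2 \<le> F * real T + a * s"
          using id1 id2 reglow unfolding Q_def by (simp add: add_divide_distrib algebra_simps)
        moreover have "c * S - Q * c\<^sup>2 = S\<^sup>2 / (4 * Q)" unfolding c_def using Qp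
          by (simp add: power2_eq_square field_simps)
        ultimately have "S\<^sup>2 / (4 * Q) \<le> F * real T + a * s" by linarith
        then have "S\<^sup>2 \<le> (F * real T + a * s) * (4 * Q)" using Qp
          by (simp add: pos_divide_le_eq)
        then have "S\<^sup>2 \<le> 4 * Q * (F * real T + a * s)" by (simp add: mult.commute)
        also have "4 * Q = 2 * s * (\<delta> * R\<^sup>2 / a + a / R\<^sup>2)"
          unfolding Q_def etas using s0 apos R_pos by (simp add: s2[symmetric] power2_eq_square field_simps)
        also have "2 * s * (\<delta> * R\<^sup>2 / a + a / R\<^sup>2) * (F * real T + a * s) \<le> X"
        proof -
          have "a / R\<^sup>2 \<le> real m * a / R\<^sup>2" using j apos R_pos
            by (simp add: divide_right_mono)
          then have "2 * s * (\<delta> * R\<^sup>2 / a + a / R\<^sup>2) \<le> 2 * s * (\<delta> * R\<^sup>2 / a + real m * a / R\<^sup>2)"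
            using s0 by simp
          moreover have "F * real T + a * s \<ge> 0" using F0 apos s0 by simp
          ultimately have "2 * s * (\<delta> * R\<^sup>2 / a + a / R\<^sup>2) * (F * real T + a * s)
              \<le> 2 * s * (\<delta> * R\<^sup>2 / a + real m * a / R\<^sup>2) * (F * real T + a * s)"
            by (rule mult_right_mono)
          moreover have "X = 2 * s * (\<delta> * R\<^sup>2 / a + real m * a / R\<^sup>2) * (F * real T + a * s)"
            unfolding X_def by (simp only: mult_ac)
          ultimately show ?thesis by simp
        qed
        finally have "S\<^sup>2 \<le> X" .
        then show ?thesis using Sp by (metis real_le_rsqrt)
      qed
      then show ?thesis unfolding S_def X_def s_def .
    qed
    show ?thesis using reg viol by blast

  qed
qed
end
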